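(* Let $n\ge0$ and let $A,B$ be induced subgraphs of a graph $G$ such that $A\cup B=G$ and such that for any two vertices $v,w$ of $G$ with $v\notin A$ and $w\notin B$, the distance from $v$ to $w$ is at least $n+1$. Then the square of inclusions \[\begin{array}{ccc} A\cap B&\hookrightarrow&A\\ \downarrow&&\downarrow\\ B&\hookrightarrow&G\end{array}\] is an $n$-skeletal pushout.
   Context: A graph is a set with a reflexive symmetric relation (edges); graph maps preserve the relation. An induced subgraph is a subset of vertices with all edges of $G$ between them. The distance between vertices is the length of a shortest path ($\infty$ if none). The box product $G\square H$ has vertex set $V(G)\times V(H)$ and $(v,w)\sim(v',w')$ iff ($v=v'$, $w\sim w'$) or ($v\sim v'$, $w=w'$); $I_1$ is a single edge. The $1$-nerve $N_1G$ is the cubical set (presheaf on the box category with faces, degeneracies and connections) whose $k$-cubes are graph maps $I_1^{\square k}\to G$. $\operatorname{sk}^n$ of a cubical set is the subobject generated by cubes of dimension $\le n$. A commutative square of graphs is an $n$-skeletal pushout if applying $\operatorname{sk}^n\circ N_1$ yields a pushout square of cubical sets. *)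

theory Defs
  imports Main "HOL-Library.Extended_Nat"
begin

definition graph :: "'v set \<Rightarrow> ('v \<Rightarrow> 'v \<Rightarrow> bool) \<Rightarrow> bool" where
  "graph V E \<longleftrightarrow> (\<forall>v w. E v w \<longrightarrow> v \<in> V \<and> w \<in> V) \<and> (\<forall>v\<in>V. E v v)
     \<and> (\<forall>v w. E v w \<longrightarrow> E w v)"

definition induced :: "('v \<Rightarrow> 'v \<Rightarrow> bool) \<Rightarrow> 'v set \<Rightarrow> 'v \<Rightarrow> 'v \<Rightarrow> bool" where
  "induced E A = (\<lambda>v w. v \<in> A \<and> w \<in> A \<and> E v w)"

definition is_path :: "'v set \<Rightarrow> ('v \<Rightarrow> 'v \<Rightarrow> bool) \<Rightarrow> 'v list \<Rightarrow> bool" where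
  "is_path V E p \<longleftrightarrow> p \<noteq> [] \<and> set p \<subseteq> V \<and> (\<forall>i. Suc i < length p \<longrightarrow> E (p!i) (p!Suc i))"

text \<open>Distance = length (number of edges) of a shortest path; infinity if none.\<close>
definition gdist :: "'v set \<Rightarrow> ('v \<Rightarrow> 'v \<Rightarrow> bool) \<Rightarrow> 'v \<Rightarrow> 'v \<Rightarrow> enat" where
  "gdist V E v w = (INF p \<in> {p. is_path V E p \<and> hd p = v \<and> last p = w}. enat (length p - 1))"

section \<open>Cubes I_1^{box k}: vertices are bool lists of length k\<close>

text \<open>Adjacency in the k-fold box product of I_1: differ in at most one coordinate.\<close>
definition cube_adj :: "bool list \<Rightarrow> bool list \<Rightarrow> bool" where
  "cube_adj xs ys \<longleftrightarrow> length xs = length ys \<and> card {i. i < length xs \<and> xs!i \<noteq> ys!i} \<le> 1"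

definition restr :: "nat \<Rightarrow> (bool list \<Rightarrow> 'a) \<Rightarrow> bool list \<Rightarrow> 'a" where
  "restr k f = (\<lambda>xs. if length xs = k then f xs else undefined)"

text \<open>Graph maps I_1^{box k} -> (V,E), normalised to undefined off the vertex set.\<close>
definition graph_map_cube :: "nat \<Rightarrow> 'v set \<Rightarrow> ('v \<Rightarrow> 'v \<Rightarrow> bool) \<Rightarrow> (bool list \<Rightarrow> 'v) \<Rightarrow> bool" where
  "graph_map_cube k V E f \<longleftrightarrow>
     (\<forall>xs. length xs = k \<longrightarrow> f xs \<in> V) \<and>
     (\<forall>xs ys. length xs = k \<longrightarrow> length ys = k \<longrightarrow> cube_adj xs ys \<longrightarrow> E (f xs) (f ys)) \<and>
     (\<forall>xs. length xs \<noteq> k \<longrightarrow> f xs = undefined)"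

text \<open>A morphism (j,k,phi) is a map box^j -> box^k, given by its (normalised) vertex map.\<close>
type_synonym boxmor = "nat \<times> nat \<times> (bool list \<Rightarrow> bool list)"

definition face :: "nat \<Rightarrow> bool \<Rightarrow> bool list \<Rightarrow> bool list" where
  "face i e = (\<lambda>xs. take i xs @ e # drop i xs)"

definition degen :: "nat \<Rightarrow> bool list \<Rightarrow> bool list" where
  "degen i = (\<lambda>xs. take i xs @ drop (Suc i) xs)"

definition conn :: "nat \<Rightarrow> bool \<Rightarrow> bool list \<Rightarrow> bool list" where
  "conn i e = (\<lambda>xs. take i xs @ (if e then xs!i \<or> xs!Suc i else xs!i \<and> xs!Suc i) # drop (i+2) xs)"

inductive_set box_mor :: "boxmor set" where
  bm_id: "(k, k, restr k id) \<in> box_mor"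
| bm_face: "i \<le> k \<Longrightarrow> (k, Suc k, restr k (face i e)) \<in> box_mor"
| bm_degen: "i \<le> k \<Longrightarrow> (Suc k, k, restr (Suc k) (degen i)) \<in> box_mor"
| bm_conn: "i < k \<Longrightarrow> (Suc k, k, restr (Suc k) (conn i e)) \<in> box_mor"
| bm_comp: "(j, k, \<phi>) \<in> box_mor \<Longrightarrow> (k, m, \<psi>) \<in> box_mor \<Longrightarrow> (j, m, restr j (\<psi> \<circ> \<phi>)) \<in> box_mor"

text \<open>cells X k is the set of k-cubes; act X (j,k,phi) : X_k -> X_j.\<close>
record 'x cset =
  cells :: "nat \<Rightarrow> 'x set"
  act :: "boxmor \<Rightarrow> 'x \<Rightarrow> 'x"

definition is_cset :: "'x cset \<Rightarrow> bool" where
  "is_cset X \<longleftrightarrow>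
    (\<forall>j k \<phi> x. (j, k, \<phi>) \<in> box_mor \<longrightarrow> x \<in> cells X k \<longrightarrow> act X (j, k, \<phi>) x \<in> cells X j) \<and>
    (\<forall>k x. x \<in> cells X k \<longrightarrow> act X (k, k, restr k id) x = x) \<and>
    (\<forall>j k m \<phi> \<psi> x. (j, k, \<phi>) \<in> box_mor \<longrightarrow> (k, m, \<psi>) \<in> box_mor \<longrightarrow> x \<in> cells X m \<longrightarrow>
        act X (j, m, restr j (\<psi> \<circ> \<phi>)) x = act X (j, k, \<phi>) (act X (k, m, \<psi>) x))"

definition cset_map :: "'x cset \<Rightarrow> 'y cset \<Rightarrow> (nat \<Rightarrow> 'x \<Rightarrow> 'y) \<Rightarrow> bool" where
  "cset_map X Y f \<longleftrightarrow>
    (\<forall>k x. x \<in> cells X k \<longrightarrow> f k x \<in> cells Y k) \<and>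
    (\<forall>j k \<phi> x. (j, k, \<phi>) \<in> box_mor \<longrightarrow> x \<in> cells X k \<longrightarrow>
        f j (act X (j, k, \<phi>) x) = act Y (j, k, \<phi>) (f k x))"

text \<open>Pushout square P -i1-> A, P -i2-> B, A -j1-> Q, B -j2-> Q in cubical sets,
  universal property tested against all cubical sets with cells in type 'y
  (the type 'y is arbitrary, i.e. universally quantified at theorem level).\<close>
definition cset_pushout :: "'y itself \<Rightarrow> 'p cset \<Rightarrow> 'a cset \<Rightarrow> 'b cset \<Rightarrow> 'q cset \<Rightarrow>
    (nat \<Rightarrow> 'p \<Rightarrow> 'a) \<Rightarrow> (nat \<Rightarrow> 'p \<Rightarrow> 'b) \<Rightarrow> (nat \<Rightarrow> 'a \<Rightarrow> 'q) \<Rightarrow> (nat \<Rightarrow> 'b \<Rightarrow> 'q) \<Rightarrow> bool" where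
  "cset_pushout _ P A B Q i1 i2 j1 j2 \<longleftrightarrow>
    is_cset P \<and> is_cset A \<and> is_cset B \<and> is_cset Q \<and>
    cset_map P A i1 \<and> cset_map P B i2 \<and> cset_map A Q j1 \<and> cset_map B Q j2 \<and>
    (\<forall>k x. x \<in> cells P k \<longrightarrow> j1 k (i1 k x) = j2 k (i2 k x)) \<and>
    (\<forall>(Y :: 'y cset) g1 g2. is_cset Y \<longrightarrow> cset_map A Y g1 \<longrightarrow> cset_map B Y g2 \<longrightarrow>
       (\<forall>k x. x \<in> cells P k \<longrightarrow> g1 k (i1 k x) = g2 k (i2 k x)) \<longrightarrow>
       (\<exists>h. cset_map Q Y h \<and> (\<forall>k x. x \<in> cells A k \<longrightarrow> h k (j1 k x) = g1 k x)
              \<and> (\<forall>k x. x \<in> cells B k \<longrightarrow> h k (j2 k x) = g2 k x)) \<and>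
       (\<forall>h h'. cset_map Q Y h \<longrightarrow> (\<forall>k x. x \<in> cells A k \<longrightarrow> h k (j1 k x) = g1 k x)
              \<longrightarrow> (\<forall>k x. x \<in> cells B k \<longrightarrow> h k (j2 k x) = g2 k x)
              \<longrightarrow> cset_map Q Y h' \<longrightarrow> (\<forall>k x. x \<in> cells A k \<longrightarrow> h' k (j1 k x) = g1 k x)
              \<longrightarrow> (\<forall>k x. x \<in> cells B k \<longrightarrow> h' k (j2 k x) = g2 k x)
              \<longrightarrow> (\<forall>k x. x \<in> cells Q k \<longrightarrow> h k x = h' k x)))"

definition N1 :: "'v set \<Rightarrow> ('v \<Rightarrow> 'v \<Rightarrow> bool) \<Rightarrow> (bool list \<Rightarrow> 'v) cset" where
  "N1 V E = \<lparr>cells = (\<lambda>k. {f. graph_map_cube k V E f}),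
             act = (\<lambda>(j, k, \<phi>) x. restr j (x \<circ> \<phi>))\<rparr>"

definition sk :: "nat \<Rightarrow> 'x cset \<Rightarrow> 'x cset" where
  "sk n X = \<lparr>cells = (\<lambda>j. {act X (j, m, \<phi>) x | m \<phi> x. m \<le> n \<and> (j, m, \<phi>) \<in> box_mor \<and> x \<in> cells X m}),
             act = act X\<rparr>"

text \<open>Induced map of an inclusion of graphs on sk^n N_1 (cubes are unchanged).\<close>
definition incl_map :: "nat \<Rightarrow> 'x \<Rightarrow> 'x" where
  "incl_map = (\<lambda>k x. x)"

definition skeletal_pushout_incl :: "'y itself \<Rightarrow> nat \<Rightarrow> ('v \<Rightarrow> 'v \<Rightarrow> bool) \<Rightarrow>
    'v set \<Rightarrow> 'v set \<Rightarrow> 'v set \<Rightarrow> 'v set \<Rightarrow> bool" where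
  "skeletal_pushout_incl T n E P A B Q \<longleftrightarrow>
     cset_pushout T (sk n (N1 P (induced E P))) (sk n (N1 A (induced E A)))
       (sk n (N1 B (induced E B))) (sk n (N1 Q (induced E Q)))
       incl_map incl_map incl_map incl_map"

end

theory Submission
  imports Defs
begin

lemma box_mor_len: "(j,k,\<phi>) \<in> box_mor \<Longrightarrow> length xs = j \<Longrightarrow> length (\<phi> xs) = k"
  by (induction arbitrary: xs rule: box_mor.induct)
     (auto simp: restr_def face_def degen_def conn_def)

lemma cube_adj_iff: "cube_adj xs ys \<longleftrightarrow> length xs = length ys \<and> (\<exists>i. \<forall>p<length xs. p \<noteq> i \<longrightarrow> xs!p = ys!p)"
proof -
  have fin: "finite {i. i < length xs \<and> xs!i \<noteq> ys!i}" by auto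
  have "card {i. i < length xs \<and> xs!i \<noteq> ys!i} \<le> 1 \<longleftrightarrow> (\<exists>i. \<forall>p<length xs. p \<noteq> i \<longrightarrow> xs!p = ys!p)"
  proof
    assume "card {i. i < length xs \<and> xs!i \<noteq> ys!i} \<le> 1"
    hence a: "\<forall>a\<in>{i. i < length xs \<and> xs!i \<noteq> ys!i}. \<forall>b\<in>{i. i < length xs \<and> xs!i \<noteq> ys!i}. a = b"
      using card_le_Suc0_iff_eq[OF fin] by simp
    show "\<exists>i. \<forall>p<length xs. p \<noteq> i \<longrightarrow> xs!p = ys!p"
    proof (cases "{i. i < length xs \<and> xs!i \<noteq> ys!i} = {}")
      case True then show ?thesis by auto
    next
      case False
      then obtain i where "i \<in> {i. i < length xs \<and> xs!i \<noteq> ys!i}" by blast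
      then show ?thesis using a by blast
    qed
  next
    assume "\<exists>i. \<forall>p<length xs. p \<noteq> i \<longrightarrow> xs!p = ys!p"
    then obtain i where "\<forall>p<length xs. p \<noteq> i \<longrightarrow> xs!p = ys!p" by blast
    hence "\<forall>a\<in>{i. i < length xs \<and> xs!i \<noteq> ys!i}. \<forall>b\<in>{i. i < length xs \<and> xs!i \<noteq> ys!i}. a = b" by auto
    thus "card {i. i < length xs \<and> xs!i \<noteq> ys!i} \<le> 1" using card_le_Suc0_iff_eq[OF fin] by simp
  qed
  thus ?thesis unfolding cube_adj_def by auto
qed

lemma face_nth: "i \<le> length xs \<Longrightarrow> face i e xs ! p = (if p < i then xs!p else if p = i then e else xs!(p-1))"
  by (auto simp: face_def nth_append min_def)

lemma degen_nth: "i < length xs \<Longrightarrow> degen i xs ! p = (if p < i then xs!p else xs!(Suc p))"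
  by (auto simp: degen_def nth_append min_def)

lemma conn_nth: "Suc i < length xs \<Longrightarrow> conn i e xs ! p = (if p < i then xs!p else if p = i then
   (if e then xs!i \<or> xs!Suc i else xs!i \<and> xs!Suc i) else xs!(Suc p))"
proof -
  assume "Suc i < length xs"
  then show ?thesis unfolding conn_def
    by (cases "p < i"; cases "p = i") (auto simp: nth_append min_def)
qed

lemma box_mor_adj: "(j,k,\<phi>) \<in> box_mor \<Longrightarrow> length xs = j \<Longrightarrow> length ys = j \<Longrightarrow> cube_adj xs ys \<Longrightarrow> cube_adj (\<phi> xs) (\<phi> ys)"
proof (induction arbitrary: xs ys rule: box_mor.induct)
  case (bm_id k)
  then show ?case by (simp add: restr_def)
next
  case (bm_face i k e)
  then obtain i0 where i0: "\<forall>p<length xs. p \<noteq> i0 \<longrightarrow> xs!p = ys!p" by (auto simp: cube_adj_iff)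
  have "\<forall>p<Suc k. p \<noteq> (if i0 < i then i0 else Suc i0) \<longrightarrow> face i e xs ! p = face i e ys ! p"
    using bm_face i0 by (auto simp: face_nth)
  moreover have "length (face i e xs) = Suc k" "length (face i e ys) = Suc k" using bm_face by (auto simp: face_def)
  ultimately show ?case using bm_face(2,3) unfolding cube_adj_iff restr_def by auto
next
  case (bm_degen i k)
  then obtain i0 where i0: "\<forall>p<length xs. p \<noteq> i0 \<longrightarrow> xs!p = ys!p" by (auto simp: cube_adj_iff)
  have "\<forall>p<k. p \<noteq> (if i0 < i then i0 else i0 - 1) \<longrightarrow> degen i xs ! p = degen i ys ! p"
    using bm_degen i0 by (auto simp: degen_nth)
  moreover have "length (degen i xs) = k" "length (degen i ys) = k" using bm_degen by (auto simp: degen_def)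
  ultimately show ?case using bm_degen(2,3) unfolding cube_adj_iff restr_def by auto
next
  case (bm_conn i k e)
  then obtain i0 where i0: "\<forall>p<length xs. p \<noteq> i0 \<longrightarrow> xs!p = ys!p" by (auto simp: cube_adj_iff)
  have "\<forall>p<k. p \<noteq> (if i0 < i then i0 else if i0 \<le> Suc i then i else i0 - 1) \<longrightarrow> conn i e xs ! p = conn i e ys ! p"
    using bm_conn i0 by (auto simp: conn_nth)
  moreover have "length (conn i e xs) = k" "length (conn i e ys) = k" using bm_conn by (auto simp: conn_def)
  ultimately show ?case using bm_conn(2,3) unfolding cube_adj_iff restr_def by auto
next
  case (bm_comp j k \<phi> m \<psi>)
  then show ?case by (auto simp: restr_def box_mor_len)
qed

definition PP :: "bool set list \<Rightarrow> bool list set" where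
  "PP Ds = {xs. length xs = length Ds \<and> (\<forall>p<length Ds. xs!p \<in> Ds!p)}"

lemma PP_iff: "xs \<in> PP Ds \<longleftrightarrow> list_all2 (\<lambda>x D. x \<in> D) xs Ds"
  by (auto simp: PP_def list_all2_conv_all_nth)

lemma PP_len: "xs \<in> PP Ds \<Longrightarrow> length xs = length Ds"
  by (simp add: PP_def)

lemma PP_nth: "xs \<in> PP Ds \<Longrightarrow> p < length Ds \<Longrightarrow> xs!p \<in> Ds!p"
  by (simp add: PP_def)

lemma PP_split: "i < length Ds \<Longrightarrow> list_all2 (\<lambda>x D. x \<in> D) as (take i Ds) \<Longrightarrow> a \<in> Ds!i \<Longrightarrow>
   list_all2 (\<lambda>x D. x \<in> D) bs (drop (Suc i) Ds) \<Longrightarrow> as @ a # bs \<in> PP Ds"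
proof -
  assume "i < length Ds" "list_all2 (\<lambda>x D. x \<in> D) as (take i Ds)" "a \<in> Ds!i"
    "list_all2 (\<lambda>x D. x \<in> D) bs (drop (Suc i) Ds)"
  then have "list_all2 (\<lambda>x D. x \<in> D) (as @ a # bs) (take i Ds @ Ds!i # drop (Suc i) Ds)"
    by (intro list_all2_appendI) auto
  then show ?thesis using \<open>i < length Ds\<close> by (simp add: PP_iff id_take_nth_drop[symmetric])
qed

lemma PP_take: "xs \<in> PP Ds \<Longrightarrow> list_all2 (\<lambda>x D. x \<in> D) (take i xs) (take i Ds)"
  by (simp add: PP_iff list_all2_takeI)

lemma PP_drop: "xs \<in> PP Ds \<Longrightarrow> list_all2 (\<lambda>x D. x \<in> D) (drop i xs) (drop i Ds)"
  by (simp add: PP_iff list_all2_dropI)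

lemma face_case: assumes "i \<le> k" "length Ds = k"
  shows "restr k (face i e) ` PP Ds = PP (take i Ds @ {e} # drop i Ds)"
proof
  let ?D = "take i Ds @ {e} # drop i Ds"
  have tk: "take i ?D = take i Ds" and dr: "drop (Suc i) ?D = drop i Ds" and nt: "?D ! i = {e}"
    and ln: "length ?D = Suc k"
    using assms by (auto simp: nth_append min_def)
  show "restr k (face i e) ` PP Ds \<subseteq> PP ?D"
  proof
    fix y assume "y \<in> restr k (face i e) ` PP Ds"
    then obtain xs where xs: "xs \<in> PP Ds" "y = restr k (face i e) xs" by blast
    have "take i xs @ e # drop i xs \<in> PP ?D"
    proof (rule PP_split[where i=i])
      show "i < length ?D" using ln assms by simp
      show "list_all2 (\<lambda>x D. x \<in> D) (take i xs) (take i ?D)" using PP_take[OF xs(1)] tk by simp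
      show "e \<in> ?D ! i" using nt by simp
      show "list_all2 (\<lambda>x D. x \<in> D) (drop i xs) (drop (Suc i) ?D)" using PP_drop[OF xs(1)] dr by simp
    qed
    then show "y \<in> PP ?D" using xs PP_len[OF xs(1)] assms by (simp add: restr_def face_def)
  qed
  show "PP ?D \<subseteq> restr k (face i e) ` PP Ds"
  proof
    fix ys assume ys: "ys \<in> PP ?D"
    have lys: "length ys = Suc k" using PP_len[OF ys] ln by simp
    have yi: "ys!i = e" using PP_nth[OF ys, of i] nt ln assms by simp
    define xs where "xs = take i ys @ drop (Suc i) ys"
    have "list_all2 (\<lambda>x D. x \<in> D) xs (take i Ds @ drop i Ds)"
      unfolding xs_def using PP_take[OF ys, of i] PP_drop[OF ys, of "Suc i"] tk dr
      by (intro list_all2_appendI) auto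
    then have xP: "xs \<in> PP Ds" by (simp add: PP_iff)
    have lx: "length xs = k" using PP_len[OF xP] assms by simp
    have "restr k (face i e) xs = take i ys @ e # drop (Suc i) ys"
      using lx lys assms by (simp add: restr_def face_def xs_def min_def)
    also have "\<dots> = take i ys @ ys!i # drop (Suc i) ys" using yi by simp
    also have "\<dots> = ys" using lys assms by (intro id_take_nth_drop[symmetric]) simp
    finally show "ys \<in> restr k (face i e) ` PP Ds" using xP by (metis imageI)
  qed
qed

lemma degen_case: assumes "i \<le> k" "length Ds = Suc k" "\<forall>D\<in>set Ds. D \<noteq> {}"
  shows "restr (Suc k) (degen i) ` PP Ds = PP (take i Ds @ drop (Suc i) Ds)"
proof
  let ?D = "take i Ds @ drop (Suc i) Ds"
  have tk: "take i ?D = take i Ds" and dr: "drop i ?D = drop (Suc i) Ds" and ln: "length ?D = k"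
    using assms by (auto simp: min_def)
  show "restr (Suc k) (degen i) ` PP Ds \<subseteq> PP ?D"
  proof
    fix y assume "y \<in> restr (Suc k) (degen i) ` PP Ds"
    then obtain xs where xs: "xs \<in> PP Ds" "y = restr (Suc k) (degen i) xs" by blast
    have "list_all2 (\<lambda>x D. x \<in> D) (take i xs @ drop (Suc i) xs) ?D"
      using PP_take[OF xs(1), of i] PP_drop[OF xs(1), of "Suc i"] by (intro list_all2_appendI)
    then show "y \<in> PP ?D" using xs PP_len[OF xs(1)] assms by (simp add: restr_def degen_def PP_iff)
  qed
  show "PP ?D \<subseteq> restr (Suc k) (degen i) ` PP Ds"
  proof
    fix ys assume ys: "ys \<in> PP ?D"
    have lys: "length ys = k" using PP_len[OF ys] ln by simp
    have "Ds!i \<in> set Ds" using assms by simp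
    then obtain d where d: "d \<in> Ds!i" using assms by blast
    define xs where "xs = take i ys @ d # drop i ys"
    have xP: "xs \<in> PP Ds" unfolding xs_def
    proof (rule PP_split[where i=i])
      show "i < length Ds" using assms by simp
      show "list_all2 (\<lambda>x D. x \<in> D) (take i ys) (take i Ds)" using PP_take[OF ys, of i] tk by metis
      show "d \<in> Ds ! i" by (rule d)
      show "list_all2 (\<lambda>x D. x \<in> D) (drop i ys) (drop (Suc i) Ds)" using PP_drop[OF ys, of i] dr by simp
    qed
    have lx: "length xs = Suc k" using PP_len[OF xP] assms by simp
    have "restr (Suc k) (degen i) xs = take i ys @ drop i ys"
      using lx lys assms by (simp add: restr_def degen_def xs_def min_def)
    also have "\<dots> = ys" by simp
    finally show "ys \<in> restr (Suc k) (degen i) ` PP Ds" using xP by (metis imageI)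
  qed
qed

definition bop :: "bool \<Rightarrow> bool \<Rightarrow> bool \<Rightarrow> bool" where
  "bop e a b = (if e then a \<or> b else a \<and> b)"

lemma conn_eq: "conn i e xs = take i xs @ bop e (xs!i) (xs!Suc i) # drop (Suc (Suc i)) xs"
  by (simp add: conn_def bop_def)

lemma conn_case: assumes "i < k" "length Ds = Suc k"
  shows "restr (Suc k) (conn i e) ` PP Ds =
    PP (take i Ds @ {bop e a b | a b. a \<in> Ds!i \<and> b \<in> Ds!Suc i} # drop (Suc (Suc i)) Ds)"
proof
  let ?D' = "{bop e a b | a b. a \<in> Ds!i \<and> b \<in> Ds!Suc i}"
  let ?D = "take i Ds @ ?D' # drop (Suc (Suc i)) Ds"
  have tk: "take i ?D = take i Ds" and dr: "drop (Suc i) ?D = drop (Suc (Suc i)) Ds"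
    and nt: "?D ! i = ?D'" and ln: "length ?D = k"
    using assms by (auto simp: nth_append min_def)
  show "restr (Suc k) (conn i e) ` PP Ds \<subseteq> PP ?D"
  proof
    fix y assume "y \<in> restr (Suc k) (conn i e) ` PP Ds"
    then obtain xs where xs: "xs \<in> PP Ds" "y = restr (Suc k) (conn i e) xs" by blast
    have "take i xs @ bop e (xs!i) (xs!Suc i) # drop (Suc (Suc i)) xs \<in> PP ?D"
    proof (rule PP_split[where i=i])
      show "i < length ?D" using ln assms by simp
      show "list_all2 (\<lambda>x D. x \<in> D) (take i xs) (take i ?D)" using PP_take[OF xs(1)] tk by simp
      show "bop e (xs!i) (xs!Suc i) \<in> ?D ! i" using nt PP_nth[OF xs(1), of i] PP_nth[OF xs(1), of "Suc i"] assms by auto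
      show "list_all2 (\<lambda>x D. x \<in> D) (drop (Suc (Suc i)) xs) (drop (Suc i) ?D)" using PP_drop[OF xs(1)] dr by simp
    qed
    then show "y \<in> PP ?D" using xs PP_len[OF xs(1)] assms by (simp add: restr_def conn_eq)
  qed
  show "PP ?D \<subseteq> restr (Suc k) (conn i e) ` PP Ds"
  proof
    fix ys assume ys: "ys \<in> PP ?D"
    have lys: "length ys = k" using PP_len[OF ys] ln by simp
    have "ys!i \<in> ?D'" using PP_nth[OF ys, of i] nt ln assms by simp
    then obtain a b where ab: "a \<in> Ds!i" "b \<in> Ds!Suc i" "ys!i = bop e a b" by blast
    define xs where "xs = take i ys @ a # b # drop (Suc i) ys"
    have xP: "xs \<in> PP Ds" unfolding xs_def
    proof (rule PP_split[where i=i])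
      show "i < length Ds" using assms by simp
      show "list_all2 (\<lambda>x D. x \<in> D) (take i ys) (take i Ds)" using PP_take[OF ys, of i] tk by simp
      show "a \<in> Ds ! i" by (rule ab)
      have "drop (Suc i) Ds = Ds!Suc i # drop (Suc (Suc i)) Ds" using assms by (simp add: Cons_nth_drop_Suc)
      then show "list_all2 (\<lambda>x D. x \<in> D) (b # drop (Suc i) ys) (drop (Suc i) Ds)"
        using PP_drop[OF ys, of "Suc i"] dr ab by simp
    qed
    have lx: "length xs = Suc k" using PP_len[OF xP] assms by simp
    have "restr (Suc k) (conn i e) xs = take i ys @ bop e a b # drop (Suc i) ys"
      using lx lys assms by (simp add: restr_def conn_eq xs_def min_def nth_append)
    also have "\<dots> = take i ys @ ys!i # drop (Suc i) ys" using ab by simp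
    also have "\<dots> = ys" using lys assms by (intro id_take_nth_drop[symmetric]) simp
    finally show "ys \<in> restr (Suc k) (conn i e) ` PP Ds" using xP by (metis imageI)
  qed
qed

lemma box_mor_image: "(j,m,\<phi>) \<in> box_mor \<Longrightarrow> length Ds = j \<Longrightarrow> (\<forall>D\<in>set Ds. D\<noteq>{}) \<Longrightarrow>
   \<exists>Ds'. length Ds' = m \<and> (\<forall>D\<in>set Ds'. D\<noteq>{}) \<and> \<phi> ` PP Ds = PP Ds'"
proof (induction arbitrary: Ds rule: box_mor.induct)
  case (bm_id k)
  have "restr k id ` PP Ds = PP Ds"
  proof -
    have "restr k id ` PP Ds = id ` PP Ds"
      by (rule image_cong) (auto simp: restr_def bm_id dest: PP_len)
    then show ?thesis by simp
  qed
  then show ?case using bm_id by blast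
next
  case (bm_face i k e)
  have "length (take i Ds @ {e} # drop i Ds) = Suc k" using bm_face by simp
  moreover have "\<forall>D\<in>set (take i Ds @ {e} # drop i Ds). D\<noteq>{}" using bm_face
    by (auto dest: in_set_takeD in_set_dropD)
  ultimately show ?case using face_case[OF bm_face(1,2)] by blast
next
  case (bm_degen i k)
  have "length (take i Ds @ drop (Suc i) Ds) = k" using bm_degen by simp
  moreover have "\<forall>D\<in>set (take i Ds @ drop (Suc i) Ds). D\<noteq>{}" using bm_degen
    by (auto dest: in_set_takeD in_set_dropD)
  ultimately show ?case using degen_case[OF bm_degen(1,2,3)] by blast
next
  case (bm_conn i k e)
  let ?D' = "{bop e a b | a b. a \<in> Ds!i \<and> b \<in> Ds!Suc i}"
  have "Ds!i \<in> set Ds" "Ds!Suc i \<in> set Ds" using bm_conn by auto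
  then have "Ds!i \<noteq> {}" "Ds!Suc i \<noteq> {}" using bm_conn by auto
  then have "?D' \<noteq> {}" by blast
  then have "\<forall>D\<in>set (take i Ds @ ?D' # drop (Suc (Suc i)) Ds). D\<noteq>{}" using bm_conn
    by (auto dest: in_set_takeD in_set_dropD)
  moreover have "length (take i Ds @ ?D' # drop (Suc (Suc i)) Ds) = k" using bm_conn by simp
  ultimately show ?case using conn_case[OF bm_conn(1,2), of e] by blast
next
  case (bm_comp j k \<phi> m \<psi>)
  obtain Ds1 where D1: "length Ds1 = k" "\<forall>D\<in>set Ds1. D\<noteq>{}" "\<phi> ` PP Ds = PP Ds1"
    using bm_comp.IH(1) bm_comp.prems by blast
  obtain Ds2 where D2: "length Ds2 = m" "\<forall>D\<in>set Ds2. D\<noteq>{}" "\<psi> ` PP Ds1 = PP Ds2"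
    using bm_comp.IH(2) D1 by blast
  have "restr j (\<psi> \<circ> \<phi>) ` PP Ds = (\<psi> \<circ> \<phi>) ` PP Ds"
    by (rule image_cong) (auto simp: restr_def bm_comp.prems dest: PP_len)
  also have "\<dots> = \<psi> ` \<phi> ` PP Ds" by (simp add: image_comp)
  finally show ?case using D1 D2 by auto
qed

lemma setter_eq: "length xs = Suc k \<Longrightarrow> l \<le> k \<Longrightarrow>
  restr (Suc k) (restr k (face l e) \<circ> restr (Suc k) (degen l)) xs = xs[l := e]"
  by (simp add: restr_def face_def degen_def upd_conv_take_nth_drop min_def)

lemma setter_mor: "l \<le> k \<Longrightarrow> (Suc k, Suc k, restr (Suc k) (restr k (face l e) \<circ> restr (Suc k) (degen l))) \<in> box_mor"
  by (rule bm_comp[OF bm_degen bm_face]) auto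

lemma bool_set_cases: "(D::bool set) \<noteq> {} \<Longrightarrow> D \<noteq> UNIV \<Longrightarrow> \<exists>e. D = {e}"
proof -
  assume ne: "D \<noteq> {}" and nu: "D \<noteq> UNIV"
  from ne obtain a where a: "a \<in> D" by blast
  from nu obtain b where b: "b \<notin> D" by blast
  have "D = {a}"
  proof (rule set_eqI)
    fix x show "x \<in> D \<longleftrightarrow> x \<in> {a}" using a b by (cases x; cases a; cases b) auto
  qed
  then show ?thesis by blast
qed

lemma retract_gen:
  assumes "length Ds = m" "\<forall>D\<in>set Ds. D \<noteq> {}"
  shows "l \<le> m \<Longrightarrow> \<exists>r. (m,m,r) \<in> box_mor \<and>
    (\<forall>xs. length xs = m \<longrightarrow> length (r xs) = m \<and> (\<forall>p<l. r xs ! p \<in> Ds!p) \<and> (\<forall>p. l \<le> p \<longrightarrow> p < m \<longrightarrow> r xs ! p = xs ! p)) \<and>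
    (\<forall>xs. length xs = m \<longrightarrow> (\<forall>p<l. xs!p \<in> Ds!p) \<longrightarrow> r xs = xs)"
proof (induction l)
  case 0
  show ?case using bm_id[of m] by (intro exI[of _ "restr m id"]) (auto simp: restr_def)
next
  case (Suc l)
  have "l \<le> m" using Suc.prems by simp
  from Suc.IH[OF this] obtain r where r: "(m,m,r) \<in> box_mor"
    "\<forall>xs. length xs = m \<longrightarrow> length (r xs) = m \<and> (\<forall>p<l. r xs ! p \<in> Ds!p) \<and> (\<forall>p. l \<le> p \<longrightarrow> p < m \<longrightarrow> r xs ! p = xs ! p)"
    "\<forall>xs. length xs = m \<longrightarrow> (\<forall>p<l. xs!p \<in> Ds!p) \<longrightarrow> r xs = xs" by blast
  have lm: "l < m" using Suc.prems by simp
  have R1: "length (r xs) = m" and R2: "\<And>p. p < l \<Longrightarrow> r xs ! p \<in> Ds!p"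
    and R3: "\<And>p. l \<le> p \<Longrightarrow> p < m \<Longrightarrow> r xs ! p = xs ! p" if "length xs = m" for xs
    using r(2)[rule_format, OF that] by blast+
  have R4: "r xs = xs" if "length xs = m" "\<And>p. p < l \<Longrightarrow> xs!p \<in> Ds!p" for xs
    using r(3)[rule_format, OF that(1)] that(2) by blast
  show ?case
  proof (cases "Ds!l = UNIV")
    case True
    show ?thesis
    proof (rule exI[of _ r], intro conjI)
      show "(m,m,r) \<in> box_mor" by (rule r(1))
      show "\<forall>xs. length xs = m \<longrightarrow> length (r xs) = m \<and> (\<forall>p<Suc l. r xs ! p \<in> Ds!p) \<and> (\<forall>p. Suc l \<le> p \<longrightarrow> p < m \<longrightarrow> r xs ! p = xs ! p)"
      proof (intro allI impI conjI)
        fix xs :: "bool list" assume xs: "length xs = m"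
        show "length (r xs) = m" using R1[OF xs] .
      next
        fix xs :: "bool list" and p assume xs: "length xs = m" and p: "p < Suc l"
        show "r xs ! p \<in> Ds!p"
        proof (cases "p = l")
          case True then show ?thesis using \<open>Ds!l = UNIV\<close> by simp
        next
          case False then show ?thesis using R2[OF xs] p by simp
        qed
      next
        fix xs :: "bool list" and p assume xs: "length xs = m" "Suc l \<le> p" "p < m"
        show "r xs ! p = xs ! p" using R3[OF xs(1)] xs by simp
      qed
      show "\<forall>xs. length xs = m \<longrightarrow> (\<forall>p<Suc l. xs!p \<in> Ds!p) \<longrightarrow> r xs = xs"
        using R4 by simp
    qed
  next
    case False
    have "Ds!l \<in> set Ds" using lm assms by simp
    then have "Ds!l \<noteq> {}" using assms(2) by blast
    then obtain e where e: "Ds!l = {e}" using bool_set_cases[OF _ False] by blast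
    obtain k where k: "m = Suc k" using lm by (cases m) auto
    have lk: "l \<le> k" using lm k by simp
    define s where "s = restr (Suc k) (restr k (face l e) \<circ> restr (Suc k) (degen l))"
    have smor: "(m,m,s) \<in> box_mor" unfolding s_def k by (rule setter_mor[OF lk])
    have seq: "s xs = xs[l := e]" if "length xs = m" for xs
      unfolding s_def using setter_eq[OF _ lk, of xs e] that k by simp
    have eq: "restr m (s \<circ> r) xs = (r xs)[l := e]" and rl: "length (r xs) = m"
      if "length xs = m" for xs
      using that R1[OF that] seq[OF R1[OF that]] by (simp_all add: restr_def)
    show ?thesis
    proof (rule exI[of _ "restr m (s \<circ> r)"], intro conjI)
      show "(m,m,restr m (s \<circ> r)) \<in> box_mor" by (rule bm_comp[OF r(1) smor])
      show "\<forall>xs. length xs = m \<longrightarrow> length (restr m (s \<circ> r) xs) = m \<and> (\<forall>p<Suc l. restr m (s \<circ> r) xs ! p \<in> Ds!p) \<and> (\<forall>p. Suc l \<le> p \<longrightarrow> p < m \<longrightarrow> restr m (s \<circ> r) xs ! p = xs ! p)"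
      proof (intro allI impI conjI)
        fix xs :: "bool list" assume xs: "length xs = m"
        show "length (restr m (s \<circ> r) xs) = m" using eq[OF xs] rl[OF xs] by simp
      next
        fix xs :: "bool list" and p assume xs: "length xs = m" and p: "p < Suc l"
        show "restr m (s \<circ> r) xs ! p \<in> Ds!p"
        proof (cases "p = l")
          case True then show ?thesis using eq[OF xs] rl[OF xs] e lm by simp
        next
          case False then show ?thesis using eq[OF xs] R2[OF xs] p by simp
        qed
      next
        fix xs :: "bool list" and p assume xs: "length xs = m" "Suc l \<le> p" "p < m"
        show "restr m (s \<circ> r) xs ! p = xs ! p" using eq[OF xs(1)] R3[OF xs(1)] xs by simp
      qed
      show "\<forall>xs. length xs = m \<longrightarrow> (\<forall>p<Suc l. xs!p \<in> Ds!p) \<longrightarrow> restr m (s \<circ> r) xs = xs"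
      proof (intro allI impI)
        fix xs :: "bool list" assume xs: "length xs = m" and P: "\<forall>p<Suc l. xs!p \<in> Ds!p"
        have rx: "r xs = xs" using R4[OF xs] P by simp
        have "xs!l = e" using P e by auto
        then have "xs[l := e] = xs" using list_update_id[of xs l] by simp
        then show "restr m (s \<circ> r) xs = xs" using eq[OF xs] rx by simp
      qed
    qed
  qed
qed

lemma retract:
  assumes "length Ds = m" "\<forall>D\<in>set Ds. D \<noteq> {}"
  shows "\<exists>r. (m,m,r) \<in> box_mor \<and> (\<forall>xs. length xs = m \<longrightarrow> r xs \<in> PP Ds) \<and> (\<forall>xs\<in>PP Ds. r xs = xs)"
proof -
  obtain r where r: "(m,m,r) \<in> box_mor"
    "\<forall>xs. length xs = m \<longrightarrow> length (r xs) = m \<and> (\<forall>p<m. r xs ! p \<in> Ds!p) \<and> (\<forall>p. m \<le> p \<longrightarrow> p < m \<longrightarrow> r xs ! p = xs ! p)"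
    "\<forall>xs. length xs = m \<longrightarrow> (\<forall>p<m. xs!p \<in> Ds!p) \<longrightarrow> r xs = xs"
    using retract_gen[OF assms le_refl] by blast
  show ?thesis using r assms by (auto simp: PP_def)
qed

lemma restr_comp: "(j,k,\<phi>) \<in> box_mor \<Longrightarrow> restr j (restr k (x \<circ> \<psi>) \<circ> \<phi>) = restr j (x \<circ> restr j (\<psi> \<circ> \<phi>))"
  by (rule ext) (simp add: restr_def box_mor_len)

lemma gm_act: "(j,k,\<phi>) \<in> box_mor \<Longrightarrow> graph_map_cube k S ES x \<Longrightarrow> graph_map_cube j S ES (restr j (x \<circ> \<phi>))"
  unfolding graph_map_cube_def by (auto simp: restr_def box_mor_len box_mor_adj)

lemma N1_act: "act (N1 S ES) (j,k,\<phi>) x = restr j (x \<circ> \<phi>)"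
  by (simp add: N1_def)

lemma sk_act: "act (sk n X) = act X"
  by (simp add: sk_def)

lemma sk_N1_cells: "cells (sk n (N1 S ES)) j =
   {restr j (x \<circ> \<phi>) | m \<phi> x. m \<le> n \<and> (j, m, \<phi>) \<in> box_mor \<and> graph_map_cube m S ES x}"
  by (simp add: sk_def N1_def)

lemma sk_gm: "y \<in> cells (sk n (N1 S ES)) j \<Longrightarrow> graph_map_cube j S ES y"
  unfolding sk_N1_cells using gm_act by blast

lemma is_cset_sk: "is_cset (sk n (N1 S ES))"
  unfolding is_cset_def
proof (intro conjI allI impI)
  fix j k \<phi> y assume m: "(j, k, \<phi>) \<in> box_mor" and y: "y \<in> cells (sk n (N1 S ES)) k"
  from y obtain m \<psi> x where x: "y = restr k (x \<circ> \<psi>)" "m \<le> n" "(k, m, \<psi>) \<in> box_mor" "graph_map_cube m S ES x"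
    unfolding sk_N1_cells by blast
  have "act (sk n (N1 S ES)) (j, k, \<phi>) y = restr j (x \<circ> restr j (\<psi> \<circ> \<phi>))"
    by (simp add: sk_act N1_act x(1) restr_comp[OF m])
  moreover have "(j, m, restr j (\<psi> \<circ> \<phi>)) \<in> box_mor" by (rule bm_comp[OF m x(3)])
  ultimately show "act (sk n (N1 S ES)) (j, k, \<phi>) y \<in> cells (sk n (N1 S ES)) j"
    unfolding sk_N1_cells using x(2,4) by blast
next
  fix k y assume y: "y \<in> cells (sk n (N1 S ES)) k"
  have "graph_map_cube k S ES y" by (rule sk_gm[OF y])
  then show "act (sk n (N1 S ES)) (k, k, restr k id) y = y"
    by (auto simp: sk_act N1_act restr_def graph_map_cube_def fun_eq_iff)
next
  fix j k m \<phi> \<psi> y assume m1: "(j, k, \<phi>) \<in> box_mor" and m2: "(k, m, \<psi>) \<in> box_mor"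
  show "act (sk n (N1 S ES)) (j, m, restr j (\<psi> \<circ> \<phi>)) y =
       act (sk n (N1 S ES)) (j, k, \<phi>) (act (sk n (N1 S ES)) (k, m, \<psi>) y)"
    by (simp add: sk_act N1_act restr_comp[OF m1])
qed

lemma cset_map_incl: "(\<And>k. cells X k \<subseteq> cells Y k) \<Longrightarrow> act X = act Y \<Longrightarrow> cset_map X Y (\<lambda>k x. x)"
  unfolding cset_map_def by auto

lemma pushout_union:
  fixes T :: "'y itself" and P :: "'x cset"
  assumes cP: "is_cset P" and cA: "is_cset A" and cB: "is_cset B" and cQ: "is_cset Q"
    and aP: "act P = act Q" and aA: "act A = act Q" and aB: "act B = act Q"
    and PAB: "\<And>k. cells P k = cells A k \<inter> cells B k" and QAB: "\<And>k. cells Q k = cells A k \<union> cells B k"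
  shows "cset_pushout T P A B Q incl_map incl_map incl_map incl_map"
  unfolding cset_pushout_def incl_map_def
proof (intro conjI allI impI)
  show "is_cset P" "is_cset A" "is_cset B" "is_cset Q" by fact+
  show "cset_map P A (\<lambda>k x. x)" using PAB aP aA by (intro cset_map_incl) auto
  show "cset_map P B (\<lambda>k x. x)" using PAB aP aB by (intro cset_map_incl) auto
  show "cset_map A Q (\<lambda>k x. x)" using QAB aA by (intro cset_map_incl) auto
  show "cset_map B Q (\<lambda>k x. x)" using QAB aB by (intro cset_map_incl) auto
  fix k x show "x = x" by (rule refl)
next
  fix Y :: "'y cset" and g1 g2
  assume Y: "is_cset Y" and g1: "cset_map A Y g1" and g2: "cset_map B Y g2"
    and agree: "\<forall>k x. x \<in> cells P k \<longrightarrow> g1 k x = g2 k x"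
  define h where "h = (\<lambda>k x. if x \<in> cells A k then g1 k x else g2 k x)"
  have hQ: "cset_map Q Y h"
    unfolding cset_map_def
  proof (intro conjI allI impI)
    fix k x assume "x \<in> cells Q k"
    then show "h k x \<in> cells Y k" using g1 g2 QAB unfolding cset_map_def h_def by auto
  next
    fix j k \<phi> x assume m: "(j, k, \<phi>) \<in> box_mor" and x: "x \<in> cells Q k"
    show "h j (act Q (j, k, \<phi>) x) = act Y (j, k, \<phi>) (h k x)"
    proof (cases "x \<in> cells A k")
      case True
      have "act A (j, k, \<phi>) x \<in> cells A j" using cA m True unfolding is_cset_def by blast
      moreover have "g1 j (act A (j, k, \<phi>) x) = act Y (j, k, \<phi>) (g1 k x)"
        using g1 m True unfolding cset_map_def by blast
      ultimately show ?thesis using True aA unfolding h_def by simp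
    next
      case False
      then have xB: "x \<in> cells B k" using x QAB by auto
      have inB: "act B (j, k, \<phi>) x \<in> cells B j" using cB m xB unfolding is_cset_def by blast
      have e2: "g2 j (act B (j, k, \<phi>) x) = act Y (j, k, \<phi>) (g2 k x)"
        using g2 m xB unfolding cset_map_def by blast
      show ?thesis
      proof (cases "act B (j, k, \<phi>) x \<in> cells A j")
        case True
        then have "act B (j, k, \<phi>) x \<in> cells P j" using inB PAB by auto
        then have "g1 j (act B (j, k, \<phi>) x) = g2 j (act B (j, k, \<phi>) x)" using agree by blast
        then show ?thesis using True False e2 aB unfolding h_def by simp
      next
        case F2: False
        then show ?thesis using False e2 aB unfolding h_def by simp
      qed
    qed
  qed
  moreover have "\<forall>k x. x \<in> cells A k \<longrightarrow> h k x = g1 k x" unfolding h_def by simp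
  moreover have "\<forall>k x. x \<in> cells B k \<longrightarrow> h k x = g2 k x"
    unfolding h_def using agree PAB by auto
  ultimately show "\<exists>h. cset_map Q Y h \<and> (\<forall>k x. x \<in> cells A k \<longrightarrow> h k x = g1 k x) \<and>
                      (\<forall>k x. x \<in> cells B k \<longrightarrow> h k x = g2 k x)" by blast
next
  fix Y :: "'y cset" and g1 g2 h h' k x
  assume "\<forall>k x. x \<in> cells A k \<longrightarrow> h k x = g1 k x" "\<forall>k x. x \<in> cells B k \<longrightarrow> h k x = g2 k x"
    "\<forall>k x. x \<in> cells A k \<longrightarrow> h' k x = g1 k x" "\<forall>k x. x \<in> cells B k \<longrightarrow> h' k x = g2 k x"
    "x \<in> cells Q k"
  then show "h k x = h' k x" using QAB by auto
qed

lemma gm_mono: "S \<subseteq> S' \<Longrightarrow> graph_map_cube m S (induced E S) x \<Longrightarrow> graph_map_cube m S' (induced E S') x"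
  unfolding graph_map_cube_def induced_def by blast

lemma sk_mono: "S \<subseteq> S' \<Longrightarrow> cells (sk n (N1 S (induced E S))) k \<subseteq> cells (sk n (N1 S' (induced E S'))) k"
  unfolding sk_N1_cells using gm_mono by blast

lemma PP_rep: "PP (replicate k UNIV) = {zs. length zs = k}"
  by (auto simp: PP_def)

lemma sk_inter:
  assumes yA: "y \<in> cells (sk n (N1 A (induced E A))) k" and yB: "y \<in> cells (sk n (N1 B (induced E B))) k"
  shows "y \<in> cells (sk n (N1 (A \<inter> B) (induced E (A \<inter> B)))) k"
proof -
  from yA obtain m \<phi> x where x: "y = restr k (x \<circ> \<phi>)" "m \<le> n" "(k, m, \<phi>) \<in> box_mor"
    "graph_map_cube m A (induced E A) x"
    unfolding sk_N1_cells by blast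
  have gB: "graph_map_cube k B (induced E B) y" by (rule sk_gm[OF yB])
  obtain Ds' where D: "length Ds' = m" "\<forall>D\<in>set Ds'. D\<noteq>{}" "\<phi> ` PP (replicate k UNIV) = PP Ds'"
    using box_mor_image[OF x(3), of "replicate k UNIV"] by auto
  obtain r where r: "(m,m,r) \<in> box_mor" "\<forall>xs. length xs = m \<longrightarrow> r xs \<in> PP Ds'" "\<forall>xs\<in>PP Ds'. r xs = xs"
    using retract[OF D(1,2)] by blast
  define z where "z = restr m (x \<circ> r)"
  have zB: "z ws \<in> B" if ws: "length ws = m" for ws
  proof -
    have "r ws \<in> \<phi> ` {zs. length zs = k}" using r(2) ws D(3) PP_rep by auto
    then obtain zs where zs: "length zs = k" "r ws = \<phi> zs" by blast
    have "z ws = y zs" using ws zs x(1) by (simp add: z_def restr_def)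
    then show ?thesis using gB zs(1) unfolding graph_map_cube_def by simp
  qed
  have zA: "z ws \<in> A" if ws: "length ws = m" for ws
  proof -
    have "length (r ws) = m" using box_mor_len[OF r(1) ws] .
    then show ?thesis using x(4) ws unfolding graph_map_cube_def z_def restr_def by simp
  qed
  have gz: "graph_map_cube m (A \<inter> B) (induced E (A \<inter> B)) z"
    unfolding graph_map_cube_def
  proof (intro conjI allI impI)
    fix ws :: "bool list" assume "length ws = m" then show "z ws \<in> A \<inter> B" using zA zB by blast
  next
    fix ws ws' :: "bool list" assume w: "length ws = m" "length ws' = m" "cube_adj ws ws'"
    have "cube_adj (r ws) (r ws')" by (rule box_mor_adj[OF r(1) w])
    moreover have "length (r ws) = m" "length (r ws') = m" using box_mor_len[OF r(1)] w by auto
    ultimately have "induced E A (x (r ws)) (x (r ws'))" using x(4) unfolding graph_map_cube_def by blast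
    then have "E (z ws) (z ws')" using w by (simp add: z_def restr_def induced_def)
    then show "induced E (A \<inter> B) (z ws) (z ws')" using zA zB w by (simp add: induced_def)
  next
    fix ws :: "bool list" assume "length ws \<noteq> m" then show "z ws = undefined" by (simp add: z_def restr_def)
  qed
  have yz: "y = restr k (z \<circ> \<phi>)"
  proof (rule ext)
    fix zs :: "bool list"
    show "y zs = restr k (z \<circ> \<phi>) zs"
    proof (cases "length zs = k")
      case True
      have "\<phi> zs \<in> PP Ds'" using D(3) PP_rep True by auto
      then have "r (\<phi> zs) = \<phi> zs" using r(3) by blast
      moreover have "length (\<phi> zs) = m" using box_mor_len[OF x(3) True] .
      ultimately show ?thesis using True x(1) by (simp add: z_def restr_def)
    next
      case False then show ?thesis using x(1) by (simp add: restr_def)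
    qed
  qed
  show ?thesis unfolding sk_N1_cells using yz x(2,3) gz by blast
qed

lemma mix_nth: "i \<le> length b \<Longrightarrow> length a = length b \<Longrightarrow>
   (take i b @ drop i a) ! q = (if q < i then b!q else a!q)"
  by (auto simp: nth_append min_def)

lemma cube_path:
  assumes "length ws1 = m" "length ws2 = m"
  shows "\<exists>p. length p = Suc m \<and> hd p = ws1 \<and> last p = ws2 \<and> (\<forall>q\<in>set p. length q = m) \<and>
     (\<forall>i. Suc i < length p \<longrightarrow> cube_adj (p!i) (p!Suc i))"
proof -
  define p where "p = map (\<lambda>i. take i ws2 @ drop i ws1) [0..<Suc m]"
  have lp: "length p = Suc m" by (simp add: p_def)
  have pn: "p ! i = take i ws2 @ drop i ws1" if "i < Suc m" for i
    using that by (simp add: p_def del: upt_Suc)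
  have ne: "p \<noteq> []" using lp by auto
  have "hd p = ws1" using pn[of 0] hd_conv_nth[OF ne] by simp
  moreover have "last p = ws2" using pn[of m] lp assms last_conv_nth[OF ne] by simp
  moreover have "\<forall>q\<in>set p. length q = m" using assms by (auto simp: p_def)
  moreover have "\<forall>i. Suc i < length p \<longrightarrow> cube_adj (p!i) (p!Suc i)"
  proof (intro allI impI)
    fix i assume i: "Suc i < length p"
    have a: "p!i = take i ws2 @ drop i ws1" and b: "p!Suc i = take (Suc i) ws2 @ drop (Suc i) ws1"
      using pn i lp by auto
    have "\<forall>q<length (p!i). q \<noteq> i \<longrightarrow> p!i!q = p!Suc i!q"
      unfolding a b using i lp assms by (auto simp: mix_nth)
    moreover have "length (p!i) = length (p!Suc i)" unfolding a b using i lp assms by simp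
    ultimately show "cube_adj (p!i) (p!Suc i)" unfolding cube_adj_iff by blast
  qed
  ultimately show ?thesis using lp by blast
qed

lemma gdist_le: "is_path V E p \<Longrightarrow> hd p = v \<Longrightarrow> last p = w \<Longrightarrow> gdist V E v w \<le> enat (length p - 1)"
  unfolding gdist_def by (rule INF_lower) simp

lemma sk_union:
  assumes yV: "y \<in> cells (sk n (N1 V (induced E V))) k"
    and dist: "\<forall>v\<in>V. \<forall>w\<in>V. v \<notin> A \<longrightarrow> w \<notin> B \<longrightarrow> enat (n + 1) \<le> gdist V E v w"
  shows "y \<in> cells (sk n (N1 A (induced E A))) k \<or> y \<in> cells (sk n (N1 B (induced E B))) k"
proof -
  from yV obtain m \<phi> x where x: "y = restr k (x \<circ> \<phi>)" "m \<le> n" "(k, m, \<phi>) \<in> box_mor"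
    "graph_map_cube m V (induced E V) x"
    unfolding sk_N1_cells by blast
  have xV: "x ws \<in> V" if "length ws = m" for ws using x(4) that unfolding graph_map_cube_def by blast
  have xE: "E (x ws) (x ws')" if "length ws = m" "length ws' = m" "cube_adj ws ws'" for ws ws'
    using x(4) that unfolding graph_map_cube_def induced_def by blast
  have "(\<forall>ws. length ws = m \<longrightarrow> x ws \<in> A) \<or> (\<forall>ws. length ws = m \<longrightarrow> x ws \<in> B)"
  proof (rule ccontr)
    assume "\<not> ?thesis"
    then obtain ws1 ws2 where w: "length ws1 = m" "x ws1 \<notin> A" "length ws2 = m" "x ws2 \<notin> B" by blast
    obtain p where p: "length p = Suc m" "hd p = ws1" "last p = ws2" "\<forall>q\<in>set p. length q = m"
      "\<forall>i. Suc i < length p \<longrightarrow> cube_adj (p!i) (p!Suc i)"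
      using cube_path[OF w(1,3)] by blast
    have "is_path V E (map x p)"
      unfolding is_path_def
    proof (intro conjI allI impI)
      show "map x p \<noteq> []" using p(1) by auto
      show "set (map x p) \<subseteq> V" using p(4) xV by auto
      fix i assume "Suc i < length (map x p)"
      then have i: "Suc i < length p" by simp
      have "p!i \<in> set p" "p!Suc i \<in> set p" using i by auto
      then show "E (map x p ! i) (map x p ! Suc i)" using xE p(4) p(5) i by auto
    qed
    moreover have "hd (map x p) = x ws1" using p(1,2) by (cases p) auto
    moreover have "last (map x p) = x ws2"
    proof -
      have "p \<noteq> []" using p(1) by auto
      then show ?thesis using p(3) last_map by metis
    qed
    ultimately have "gdist V E (x ws1) (x ws2) \<le> enat (length (map x p) - 1)" by (rule gdist_le)
    then have "gdist V E (x ws1) (x ws2) \<le> enat m" using p(1) by simp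
    moreover have "enat (n + 1) \<le> gdist V E (x ws1) (x ws2)" using dist xV w by blast
    ultimately have "enat (n + 1) \<le> enat m" by (rule order_trans[rotated])
    then show False using x(2) by simp
  qed
  then show ?thesis
  proof
    assume all: "\<forall>ws. length ws = m \<longrightarrow> x ws \<in> A"
    have "graph_map_cube m A (induced E A) x" using x(4) all unfolding graph_map_cube_def induced_def by blast
    then show ?thesis unfolding sk_N1_cells using x(1,2,3) by blast
  next
    assume all: "\<forall>ws. length ws = m \<longrightarrow> x ws \<in> B"
    have "graph_map_cube m B (induced E B) x" using x(4) all unfolding graph_map_cube_def induced_def by blast
    then show ?thesis unfolding sk_N1_cells using x(1,2,3) by blast
  qed
qed

theorem corollary2p8:
  fixes V :: "'v set" and E :: "'v \<Rightarrow> 'v \<Rightarrow> bool" and A B :: "'v set" and n :: nat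
  assumes "graph V E"
    and "A \<subseteq> V" and "B \<subseteq> V" and "A \<union> B = V"
    and "\<forall>v\<in>V. \<forall>w\<in>V. v \<notin> A \<longrightarrow> w \<notin> B \<longrightarrow> enat (n + 1) \<le> gdist V E v w"
  shows "skeletal_pushout_incl TYPE('y) n E (A \<inter> B) A B V"
  unfolding skeletal_pushout_incl_def
proof (rule pushout_union)
  show "is_cset (sk n (N1 (A \<inter> B) (induced E (A \<inter> B))))" "is_cset (sk n (N1 A (induced E A)))"
    "is_cset (sk n (N1 B (induced E B)))" "is_cset (sk n (N1 V (induced E V)))" by (rule is_cset_sk)+
  show "act (sk n (N1 (A \<inter> B) (induced E (A \<inter> B)))) = act (sk n (N1 V (induced E V)))"
    "act (sk n (N1 A (induced E A))) = act (sk n (N1 V (induced E V)))"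
    "act (sk n (N1 B (induced E B))) = act (sk n (N1 V (induced E V)))"
    by (simp_all add: sk_def N1_def)
  fix k
  show "cells (sk n (N1 (A \<inter> B) (induced E (A \<inter> B)))) k =
        cells (sk n (N1 A (induced E A))) k \<inter> cells (sk n (N1 B (induced E B))) k"
    using sk_inter sk_mono[of "A \<inter> B" A n E k] sk_mono[of "A \<inter> B" B n E k] by blast
  show "cells (sk n (N1 V (induced E V))) k =
        cells (sk n (N1 A (induced E A))) k \<union> cells (sk n (N1 B (induced E B))) k"
    using sk_union[OF _ assms(5)] sk_mono[OF assms(2), of n E k] sk_mono[OF assms(3), of n E k] by blast
qed

end
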